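(* Let $(P_n)_{n\ge0}$ be a sequence with $P_n\in\Lambda_n$ satisfying: $P_0$ is a unit of $\Lambda_0=\mathbf{Z}_p$; $\pi_{1/0}(P_1)=uP_0$ for some $u\in\mathbf{Z}_p^\times$; and $\pi_{n+1/n}(P_{n+1})=a\,P_n-\nu_{n-1/n}(P_{n-1})$ for all $n\ge1$, where $a\in p\mathbf{Z}_p$ is fixed. Then for all $n\ge0$, $P_n\neq 0$, $\mu(P_n)=0$ and $\lambda(P_n)=q_n$, where $q_0=q_1=0$ and for $n\ge2$ $$q_n=\begin{cases}p^{n-1}-p^{n-2}+\cdots+p-1 & n \text{ even},\\ p^{n-1}-p^{n-2}+\cdots+p^2-p & n \text{ odd}.\end{cases}$$
   Context: Let $p$ be an odd prime. For $n\ge0$ let $G_n$ be a cyclic group of order $p^n$ with surjections $G_n\to G_{n-1}$, $\Lambda_n=\mathbf{Z}_p[G_n]$, $\widetilde\Lambda_n=\mathbf{F}_p[G_n]$ and $\widetilde I_n$ the augmentation ideal of $\widetilde\Lambda_n$. For nonzero $f\in\Lambda_n$, $\mu(f)$ is the unique integer with $f\in p^{\mu(f)}\Lambda_n\setminus p^{\mu(f)+1}\Lambda_n$, and $\lambda(f)$ is the unique integer such that the reduction mod $p$ of $p^{-\mu(f)}f$ lies in $\widetilde I_n^{\lambda(f)}\setminus\widetilde I_n^{\lambda(f)+1}$. $\pi_{n/n-1}:\Lambda_n\to\Lambda_{n-1}$ is induced by $G_n\to G_{n-1}$, and $\nu_{n-1/n}:\Lambda_{n-1}\to\Lambda_n$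 is the $\mathbf{Z}_p$-linear map with $\nu_{n-1/n}(\sigma)=\sum_{\tau\in G_n,\ \tau\mapsto\sigma}\tau$ for $\sigma\in G_{n-1}$. (In the paper, $P_n=F_n(c_n)$ is the image of Kobayashi's point $c_n$ and $a=a_p$; only the stated properties are used.) *)

theory Defs
  imports "HOL-Computational_Algebra.Primes"
begin

text \<open>An element of Z_p is represented by x :: nat => int with x k in {0..<p^k}
  (its residue mod p^k) and x (Suc k) mod p^k = x k.\<close>

definition zp :: "nat \<Rightarrow> (nat \<Rightarrow> int) \<Rightarrow> bool" where
  "zp p x \<longleftrightarrow> (\<forall>k. 0 \<le> x k \<and> x k < int p ^ k \<and> x (Suc k) mod (int p ^ k) = x k)"

definition zp_of_int :: "nat \<Rightarrow> int \<Rightarrow> nat \<Rightarrow> int" where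
  "zp_of_int p z = (\<lambda>k. z mod (int p ^ k))"

definition zp_add :: "nat \<Rightarrow> (nat \<Rightarrow> int) \<Rightarrow> (nat \<Rightarrow> int) \<Rightarrow> nat \<Rightarrow> int" where
  "zp_add p x y = (\<lambda>k. (x k + y k) mod (int p ^ k))"

definition zp_neg :: "nat \<Rightarrow> (nat \<Rightarrow> int) \<Rightarrow> nat \<Rightarrow> int" where
  "zp_neg p x = (\<lambda>k. (- x k) mod (int p ^ k))"

definition zp_mul :: "nat \<Rightarrow> (nat \<Rightarrow> int) \<Rightarrow> (nat \<Rightarrow> int) \<Rightarrow> nat \<Rightarrow> int" where
  "zp_mul p x y = (\<lambda>k. (x k * y k) mod (int p ^ k))"

definition zp_sum :: "nat \<Rightarrow> ('a \<Rightarrow> nat \<Rightarrow> int) \<Rightarrow> 'a set \<Rightarrow> nat \<Rightarrow> int" where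
  "zp_sum p f A = (\<lambda>k. (\<Sum>a\<in>A. f a k) mod (int p ^ k))"

definition zp_unit :: "nat \<Rightarrow> (nat \<Rightarrow> int) \<Rightarrow> bool" where
  "zp_unit p x \<longleftrightarrow> zp p x \<and> (\<exists>y. zp p y \<and> zp_mul p x y = zp_of_int p 1)"

definition zp_in_pZp :: "nat \<Rightarrow> (nat \<Rightarrow> int) \<Rightarrow> bool" where
  "zp_in_pZp p x \<longleftrightarrow> zp p x \<and> (\<exists>b. zp p b \<and> x = zp_mul p (zp_of_int p (int p)) b)"

text \<open>G_n is realised as Z/p^n Z with elements 0..<p^n (group law: addition mod p^n);
  the surjection G_n -> G_(n-1) is g |-> g mod p^(n-1).  An element of Lambda_n is a
  function F with F g the Z_p-coefficient of g (g < p^n), and F g = 0 for g >= p^n.\<close>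

definition Lam :: "nat \<Rightarrow> nat \<Rightarrow> (nat \<Rightarrow> nat \<Rightarrow> int) \<Rightarrow> bool" where
  "Lam p n F \<longleftrightarrow> (\<forall>g. (g < p ^ n \<longrightarrow> zp p (F g)) \<and> (p ^ n \<le> g \<longrightarrow> F g = zp_of_int p 0))"

definition lam_add :: "nat \<Rightarrow> (nat \<Rightarrow> nat \<Rightarrow> int) \<Rightarrow> (nat \<Rightarrow> nat \<Rightarrow> int) \<Rightarrow> nat \<Rightarrow> nat \<Rightarrow> int" where
  "lam_add p F H = (\<lambda>g. zp_add p (F g) (H g))"

definition lam_neg :: "nat \<Rightarrow> (nat \<Rightarrow> nat \<Rightarrow> int) \<Rightarrow> nat \<Rightarrow> nat \<Rightarrow> int" where
  "lam_neg p F = (\<lambda>g. zp_neg p (F g))"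

definition lam_smult :: "nat \<Rightarrow> (nat \<Rightarrow> int) \<Rightarrow> (nat \<Rightarrow> nat \<Rightarrow> int) \<Rightarrow> nat \<Rightarrow> nat \<Rightarrow> int" where
  "lam_smult p c F = (\<lambda>g. zp_mul p c (F g))"

definition lam_pi :: "nat \<Rightarrow> nat \<Rightarrow> (nat \<Rightarrow> nat \<Rightarrow> int) \<Rightarrow> nat \<Rightarrow> nat \<Rightarrow> int" where
  "lam_pi p n F = (\<lambda>h. if h < p ^ (n - 1)
      then zp_sum p F {g. g < p ^ n \<and> g mod p ^ (n - 1) = h}
      else zp_of_int p 0)"

text \<open>nu_{n-1/n} : Lambda_(n-1) -> Lambda_n, sigma |-> sum of its preimages\<close>
definition lam_nu :: "nat \<Rightarrow> nat \<Rightarrow> (nat \<Rightarrow> nat \<Rightarrow> int) \<Rightarrow> nat \<Rightarrow> nat \<Rightarrow> int" where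
  "lam_nu p n Q = (\<lambda>g. if g < p ^ n then Q (g mod p ^ (n - 1)) else zp_of_int p 0)"

definition in_pLam :: "nat \<Rightarrow> nat \<Rightarrow> nat \<Rightarrow> (nat \<Rightarrow> nat \<Rightarrow> int) \<Rightarrow> bool" where
  "in_pLam p n m F \<longleftrightarrow> (\<exists>G. Lam p n G \<and> F = lam_smult p (zp_of_int p (int p ^ m)) G)"

definition mu_inv :: "nat \<Rightarrow> nat \<Rightarrow> (nat \<Rightarrow> nat \<Rightarrow> int) \<Rightarrow> nat" where
  "mu_inv p n F = (THE m. in_pLam p n m F \<and> \<not> in_pLam p n (Suc m) F)"

definition Fp_elem :: "nat \<Rightarrow> nat \<Rightarrow> (nat \<Rightarrow> int) \<Rightarrow> bool" where
  "Fp_elem p n x \<longleftrightarrow> (\<forall>g. 0 \<le> x g \<and> x g < int p \<and> (p ^ n \<le> g \<longrightarrow> x g = 0))"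

definition fp_add :: "nat \<Rightarrow> (nat \<Rightarrow> int) \<Rightarrow> (nat \<Rightarrow> int) \<Rightarrow> nat \<Rightarrow> int" where
  "fp_add p x y = (\<lambda>g. (x g + y g) mod int p)"

definition fp_mul :: "nat \<Rightarrow> nat \<Rightarrow> (nat \<Rightarrow> int) \<Rightarrow> (nat \<Rightarrow> int) \<Rightarrow> nat \<Rightarrow> int" where
  "fp_mul p n x y = (\<lambda>g. if g < p ^ n
      then (\<Sum>h<p ^ n. x h * y ((g + p ^ n - h) mod p ^ n)) mod int p else 0)"

definition aug_ideal :: "nat \<Rightarrow> nat \<Rightarrow> (nat \<Rightarrow> int) set" where
  "aug_ideal p n = {x. Fp_elem p n x \<and> (\<Sum>g<p ^ n. x g) mod int p = 0}"

inductive_set ideal_prod :: "nat \<Rightarrow> nat \<Rightarrow> (nat \<Rightarrow> int) set \<Rightarrow> (nat \<Rightarrow> int) set \<Rightarrow> (nat \<Rightarrow> int) set"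
  for p n A B where
  zero: "(\<lambda>g. 0) \<in> ideal_prod p n A B"
| step: "x \<in> ideal_prod p n A B \<Longrightarrow> a \<in> A \<Longrightarrow> b \<in> B \<Longrightarrow> fp_add p x (fp_mul p n a b) \<in> ideal_prod p n A B"

fun aug_pow :: "nat \<Rightarrow> nat \<Rightarrow> nat \<Rightarrow> (nat \<Rightarrow> int) set" where
  "aug_pow p n 0 = {x. Fp_elem p n x}"
| "aug_pow p n (Suc l) = ideal_prod p n (aug_pow p n l) (aug_ideal p n)"

definition red :: "(nat \<Rightarrow> nat \<Rightarrow> int) \<Rightarrow> nat \<Rightarrow> int" where
  "red F = (\<lambda>g. F g 1)"

definition lambda_inv :: "nat \<Rightarrow> nat \<Rightarrow> (nat \<Rightarrow> nat \<Rightarrow> int) \<Rightarrow> nat" where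
  "lambda_inv p n F = (THE l.
     (let G = (THE G. Lam p n G \<and> F = lam_smult p (zp_of_int p (int p ^ mu_inv p n F)) G)
      in red G \<in> aug_pow p n l \<and> red G \<notin> aug_pow p n (Suc l)))"

definition q_seq :: "nat \<Rightarrow> nat \<Rightarrow> int" where
  "q_seq p n = (if n < 2 then 0
     else if even n then (\<Sum>i<n. (-1) ^ (n - 1 - i) * int p ^ i)
     else (\<Sum>i\<in>{1..<n}. (-1) ^ (n - 1 - i) * int p ^ i))"

end

theory Submission
  imports Defs "HOL-Computational_Algebra.Polynomial"
begin

definition pdv :: "nat \<Rightarrow> int poly \<Rightarrow> bool" where
  "pdv p F \<longleftrightarrow> (\<exists>H. F = smult (int p) H)"

lemma pdv_coeff: "pdv p F \<longleftrightarrow> (\<forall>i. int p dvd coeff F i)"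
proof
  assume "pdv p F" then show "\<forall>i. int p dvd coeff F i" by (auto simp: pdv_def)
next
  assume h: "\<forall>i. int p dvd coeff F i"
  have "F = smult (int p) (map_poly (\<lambda>c. c div int p) F)"
    by (rule poly_eqI) (simp add: coeff_map_poly h)
  then show "pdv p F" unfolding pdv_def by blast
qed

lemma pdv_0[simp]: "pdv p 0" by (auto simp: pdv_def intro: exI[of _ 0])
lemma pdv_smult_p[simp]: "pdv p (smult (int p) H)" by (auto simp: pdv_def)
lemma pdv_add: "pdv p F \<Longrightarrow> pdv p G \<Longrightarrow> pdv p (F + G)"
  by (auto simp: pdv_def smult_add_right[symmetric])
lemma pdv_uminus: "pdv p F \<Longrightarrow> pdv p (- F)"
  by (auto simp: pdv_def) (metis smult_minus_right)
lemma pdv_diff: "pdv p F \<Longrightarrow> pdv p G \<Longrightarrow> pdv p (F - G)"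
  by (auto simp: pdv_def smult_diff_right[symmetric])
lemma pdv_multL: "pdv p F \<Longrightarrow> pdv p (F * G)"
  by (auto simp: pdv_def)
lemma pdv_multR: "pdv p F \<Longrightarrow> pdv p (G * F)"
  by (auto simp: pdv_def)
lemma pdv_pcompose: "pdv p F \<Longrightarrow> pdv p (pcompose F Q)"
  by (auto simp: pdv_def pcompose_smult)
lemma pdv_sum: "(\<And>x. x \<in> A \<Longrightarrow> pdv p (f x)) \<Longrightarrow> pdv p (\<Sum>x\<in>A. f x)"
  by (induct A rule: infinite_finite_induct) (auto intro: pdv_add)
lemma pdv_smult: "pdv p F \<Longrightarrow> pdv p (smult c F)"
  by (auto simp: pdv_def) (metis mult.commute smult_smult)
lemma pdv_smult_dvd: "int p dvd c \<Longrightarrow> pdv p (smult c F)"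
  by (auto simp: pdv_def elim!: dvdE) (metis smult_smult)

lemma frob:
  assumes "prime p"
  shows "pdv p ((U + V) ^ p - U ^ p - V ^ p)"
proof -
  have p0: "p \<noteq> 0" using assms by auto
  have "(U + V) ^ p = (\<Sum>k\<le>p. of_nat (p choose k) * U ^ k * V ^ (p - k))"
    by (rule binomial_ring)
  also have "{..p} = insert p (insert 0 {1..<p})" using p0 by auto
  also have "(\<Sum>k\<in>insert p (insert 0 {1..<p}). of_nat (p choose k) * U ^ k * V ^ (p - k))
     = U ^ p + V ^ p + (\<Sum>k\<in>{1..<p}. of_nat (p choose k) * U ^ k * V ^ (p - k))"
    using p0 by (simp add: sum.insert)
  finally have e: "(U + V) ^ p - U ^ p - V ^ p = (\<Sum>k\<in>{1..<p}. of_nat (p choose k) * U ^ k * V ^ (p - k))"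
    by simp
  show ?thesis unfolding e
  proof (rule pdv_sum)
    fix k assume k: "k \<in> {1..<p}"
    have "p dvd (p choose k)" using k p0 assms by (intro dvd_choose_prime) auto
    then obtain m where m: "p choose k = p * m" by blast
    have "(of_nat (p choose k) :: int poly) = smult (int p) (of_nat m)"
      unfolding m by (simp add: of_nat_poly smult_conv_map_poly map_poly_pCons)
    then show "pdv p (of_nat (p choose k) * U ^ k * V ^ (p - k))"
      by (simp add: pdv_multL)
  qed
qed

lemma pdv_pow_cong:
  assumes "pdv p (A - B)"
  shows "pdv p (A ^ m - B ^ m)"
proof (induct m)
  case (Suc m)
  have "A ^ Suc m - B ^ Suc m = (A ^ m - B ^ m) * A + B ^ m * (A - B)"
    by (simp add: algebra_simps)
  then show ?case using Suc assms by (simp add: pdv_add pdv_multL pdv_multR)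
qed simp

lemma frob_pow:
  assumes "prime p"
  shows "pdv p ([:1,1:] ^ (p ^ k) - [:0,1:] ^ (p ^ k) - 1)"
proof (induct k)
  case 0
  then show ?case by (simp add: one_pCons)
next
  case (Suc k)
  let ?Z = "[:1,1:] ^ (p ^ k) :: int poly"
  let ?U = "[:0,1:] ^ (p ^ k) + 1 :: int poly"
  have "pdv p (?Z - ?U)" using Suc by (simp add: algebra_simps)
  then have 1: "pdv p (?Z ^ p - ?U ^ p)" by (rule pdv_pow_cong)
  have 2: "pdv p (?U ^ p - ([:0,1:] ^ (p ^ k)) ^ p - 1 ^ p)" by (rule frob[OF assms])
  have "?Z ^ p = [:1,1:] ^ (p ^ Suc k)" by (simp add: power_mult[symmetric] mult.commute)
  moreover have "([:0,1:] ^ (p ^ k)) ^ p = ([:0,1:] ^ (p ^ Suc k) :: int poly)"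
    by (simp add: power_mult[symmetric] mult.commute)
  ultimately show ?case using pdv_add[OF 1 2] by (simp add: algebra_simps)
qed

definition kc :: "nat \<Rightarrow> nat \<Rightarrow> int poly \<Rightarrow> bool" where
  "kc p N F \<longleftrightarrow> (\<exists>K. pdv p (F - ([:0,1:] ^ N - 1) * K))"

lemma kc_pdv: "pdv p F \<Longrightarrow> kc p N F"
  unfolding kc_def by (rule exI[of _ 0]) simp
lemma kc_X: "kc p N (([:0,1:] ^ N - 1) * K)"
  unfolding kc_def by (rule exI[of _ K]) simp
lemma kc_add: "kc p N F \<Longrightarrow> kc p N G \<Longrightarrow> kc p N (F + G)"
  unfolding kc_def
proof (elim exE)
  fix K L assume "pdv p (F - ([:0,1:] ^ N - 1) * K)" "pdv p (G - ([:0,1:] ^ N - 1) * L)"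
  from pdv_add[OF this] show "\<exists>K. pdv p (F + G - ([:0, 1:] ^ N - 1) * K)"
    by (intro exI[of _ "K + L"]) (simp add: algebra_simps)
qed
lemma kc_uminus: "kc p N F \<Longrightarrow> kc p N (- F)"
  unfolding kc_def
proof (elim exE)
  fix K assume "pdv p (F - ([:0,1:] ^ N - 1) * K)"
  from pdv_uminus[OF this] show "\<exists>K. pdv p (- F - ([:0, 1:] ^ N - 1) * K)"
    by (intro exI[of _ "- K"]) (simp add: algebra_simps)
qed
lemma kc_diff: "kc p N F \<Longrightarrow> kc p N G \<Longrightarrow> kc p N (F - G)"
  using kc_add[of p N F "- G"] kc_uminus[of p N G] by simp
lemma kc_multL: "kc p N F \<Longrightarrow> kc p N (F * G)"
  unfolding kc_def
proof (elim exE)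
  fix K assume "pdv p (F - ([:0,1:] ^ N - 1) * K)"
  from pdv_multL[OF this, of G] show "\<exists>K. pdv p (F * G - ([:0, 1:] ^ N - 1) * K)"
    by (intro exI[of _ "K * G"]) (simp add: algebra_simps)
qed
lemma kc_multR: "kc p N F \<Longrightarrow> kc p N (G * F)"
  using kc_multL[of p N F G] by (simp add: mult.commute)
lemma kc_sum: "(\<And>x. x \<in> A \<Longrightarrow> kc p N (f x)) \<Longrightarrow> kc p N (\<Sum>x\<in>A. f x)"
  by (induct A rule: infinite_finite_induct) (auto intro: kc_add kc_pdv)
lemma kc_dvd: "([:0,1:] ^ N - 1) dvd F \<Longrightarrow> kc p N F"
  by (auto elim!: dvdE intro: kc_X)

lemma pcompose_X_pow: "pcompose ([:0,1:] ^ N) Q = Q ^ N"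
  by (induct N) (simp_all add: pcompose_mult pcompose_1 pcompose_pCons)

lemma coeff_Xpow_mult_low: "j < N \<Longrightarrow> coeff ([:0,1:] ^ N * Q) j = (0::int)"
  using coeff_monom_mult[of "1::int" N Q j] by (simp add: monom_altdef)

lemma coeff_Xpow_mult: "coeff ([:0,1:] ^ N * Q) j = (if j < N then 0 else coeff Q (j - N) :: int)"
  using coeff_monom_mult[of "1::int" N Q j] by (simp add: monom_altdef)

lemma kc_coeff:
  assumes "prime p" "kc p (p ^ n) F" "j < p ^ n"
  shows "int p dvd coeff (pcompose F [:1,1:]) j"
proof -
  obtain K where K: "pdv p (F - ([:0,1:] ^ (p ^ n) - 1) * K)" using assms(2) by (auto simp: kc_def)
  let ?T = "\<lambda>F. pcompose F [:1,1:]"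
  have "pdv p (?T (F - ([:0,1:] ^ (p ^ n) - 1) * K))" by (rule pdv_pcompose[OF K])
  also have "?T (F - ([:0,1:] ^ (p ^ n) - 1) * K) = ?T F - ([:1,1:] ^ (p ^ n) - 1) * ?T K"
    by (simp add: pcompose_diff pcompose_mult pcompose_X_pow pcompose_1)
  finally have 1: "pdv p (?T F - ([:1,1:] ^ (p ^ n) - 1) * ?T K)" .
  have 2: "pdv p (([:1,1:] ^ (p ^ n) - [:0,1:] ^ (p ^ n) - 1) * ?T K)"
    by (rule pdv_multL[OF frob_pow[OF assms(1)]])
  have "pdv p (?T F - [:0,1:] ^ (p ^ n) * ?T K)"
    using pdv_add[OF 1 2] by (simp add: algebra_simps)
  then have "int p dvd coeff (?T F - [:0,1:] ^ (p ^ n) * ?T K) j" by (simp add: pdv_coeff)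
  then show ?thesis using coeff_Xpow_mult_low[OF assms(3)] by simp
qed

lemma kc_coeff_diff:
  assumes "prime p" "kc p (p ^ n) (F - G)" "j < p ^ n"
  shows "int p dvd coeff (pcompose F [:1,1:]) j - coeff (pcompose G [:1,1:]) j"
  using kc_coeff[OF assms] by (simp add: pcompose_diff)

definition pol :: "nat \<Rightarrow> (nat \<Rightarrow> int) \<Rightarrow> int poly" where
  "pol N f = (\<Sum>g<N. monom (f g) g)"

lemma coeff_pol: "coeff (pol N f) i = (if i < N then f i else 0)"
  unfolding pol_def coeff_sum by (simp add: coeff_monom)

lemma poly_pol_1: "poly (pol N f) 1 = (\<Sum>g<N. f g)"
  unfolding pol_def poly_sum by (simp add: poly_monom)

lemma pol_smult: "pol N f = (\<Sum>g<N. smult (f g) ([:0,1:] ^ g))"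
  unfolding pol_def by (simp add: monom_altdef)

lemma dvd_mod_diff: "(m::int) dvd (a mod m - a)"
  using mod_eq_dvd_iff[of "a mod m" m a] by simp

lemma pol_fp_add: "pdv p (pol N (fp_add p x y) - (pol N x + pol N y))"
  unfolding pdv_coeff
proof
  fix i
  show "int p dvd coeff (pol N (fp_add p x y) - (pol N x + pol N y)) i"
    by (simp add: coeff_pol fp_add_def dvd_mod_diff)
qed

lemma Xpow_dvd: "((x::'a::comm_ring_1) ^ N - 1) dvd (x ^ m - x ^ (m mod N))"
proof -
  have "x ^ m = x ^ (m mod N) * (x ^ N) ^ (m div N)"
    by (metis mod_div_decomp power_add power_mult add.commute mult.commute)
  then have "x ^ m - x ^ (m mod N) = x ^ (m mod N) * ((x ^ N) ^ (m div N) - 1)"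
    by (simp add: algebra_simps)
  also have "(x ^ N) ^ (m div N) - 1 = (x ^ N - 1) * (\<Sum>i<m div N. (x ^ N) ^ i)"
    by (rule power_diff_1_eq)
  finally show ?thesis by simp
qed

lemma reindex_mod:
  fixes N h :: nat
  assumes "h < N"
  shows "(\<Sum>g<N. F g ((g + N - h) mod N)) = (\<Sum>k<N. F ((h + k) mod N) k)"
proof -
  have ij: "(h + (a + N - h) mod N) mod N = a" if "a < N" for a
  proof -
    have "(h + (a + N - h) mod N) mod N = (h + (a + N - h)) mod N" by (simp add: mod_add_right_eq)
    also have "h + (a + N - h) = a + N" using assms by simp
    finally show ?thesis using that by simp
  qed
  have ji: "((h + b) mod N + N - h) mod N = b" if "b < N" for b
  proof -
    have "(h + b) mod N + N - h = (h + b) mod N + (N - h)" using assms by simp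
    then have "((h + b) mod N + N - h) mod N = ((h + b) + (N - h)) mod N"
      by (simp add: mod_add_left_eq)
    also have "(h + b) + (N - h) = b + N" using assms by simp
    finally show ?thesis using that by simp
  qed
  show ?thesis
    by (rule sum.reindex_bij_witness[where i="\<lambda>k. (h + k) mod N" and j="\<lambda>g. (g + N - h) mod N"])
       (use assms ij ji in auto)
qed

lemma pol_fp_mul:
  assumes "p > 0"
  shows "kc p (p ^ n) (pol (p ^ n) (fp_mul p n x y) - pol (p ^ n) x * pol (p ^ n) y)"
proof -
  define N where "N = p ^ n"
  have N0: "N > 0" using assms by (simp add: N_def)
  define c where "c g = (\<Sum>h<N. x h * y ((g + N - h) mod N))" for g
  let ?X = "[:0,1:] :: int poly"
  have 1: "pdv p (pol N (fp_mul p n x y) - pol N c)"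
    unfolding pdv_coeff by (simp add: coeff_pol fp_mul_def c_def N_def dvd_mod_diff)
  have "pol N c = (\<Sum>g<N. \<Sum>h<N. smult (x h * y ((g + N - h) mod N)) (?X ^ g))"
    unfolding pol_smult c_def by (simp add: smult_sum)
  also have "\<dots> = (\<Sum>h<N. \<Sum>g<N. smult (x h * y ((g + N - h) mod N)) (?X ^ g))"
    by (rule sum.swap)
  also have "\<dots> = (\<Sum>h<N. \<Sum>k<N. smult (x h * y k) (?X ^ ((h + k) mod N)))"
  proof (rule sum.cong[OF refl])
    fix h assume "h \<in> {..<N}"
    then show "(\<Sum>g<N. smult (x h * y ((g + N - h) mod N)) (?X ^ g))
        = (\<Sum>k<N. smult (x h * y k) (?X ^ ((h + k) mod N)))"
      using reindex_mod[of h N "\<lambda>g k. smult (x h * y k) (?X ^ g)"] by simp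
  qed
  finally have 2: "pol N c = (\<Sum>h<N. \<Sum>k<N. smult (x h * y k) (?X ^ ((h + k) mod N)))" .
  have 3: "pol N x * pol N y = (\<Sum>h<N. \<Sum>k<N. smult (x h * y k) (?X ^ (h + k)))"
    unfolding pol_smult sum_product by (simp add: power_add mult.commute mult.left_commute)
  have 4: "kc p N (pol N x * pol N y - pol N c)"
    unfolding 2 3 sum_subtractf[symmetric]
    by (intro kc_sum kc_dvd) (simp add: smult_diff_right[symmetric] Xpow_dvd dvd_smult)
  have "kc p N ((pol N (fp_mul p n x y) - pol N c) - (pol N x * pol N y - pol N c))"
    by (rule kc_diff[OF kc_pdv[OF 1] 4])
  then show ?thesis by (simp add: N_def)
qed

lemma small_dvd_eq:
  fixes a b m :: int
  assumes "0 \<le> a" "a < m" "0 \<le> b" "b < m" "m dvd a - b"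
  shows "a = b"
proof -
  have "a mod m = b mod m" using assms(5) by (simp add: mod_eq_dvd_iff)
  then show ?thesis using assms by simp
qed

lemma uniq:
  assumes p0: "p > 0" and f: "Fp_elem p n f" and f': "Fp_elem p n f'"
    and k: "kc p (p ^ n) (pol (p ^ n) f - pol (p ^ n) f')"
  shows "f = f'"
proof -
  define N where "N = p ^ n"
  have N0: "N > 0" using p0 by (simp add: N_def)
  define D where "D = pol N f - pol N f'"
  obtain K where K: "pdv p (D - ([:0,1:] ^ N - 1) * K)" using k by (auto simp: kc_def D_def N_def)
  define K' where "K' = map_poly (\<lambda>c. c mod int p) K"
  have cK': "coeff K' i = coeff K i mod int p" for i
    by (simp add: K'_def coeff_map_poly)
  have "pdv p (K - K')"
    unfolding pdv_coeff by (simp add: cK' mod_eq_dvd_iff[symmetric])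
  then have "pdv p (([:0,1:] ^ N - 1) * (K - K'))" by (rule pdv_multR)
  from pdv_add[OF K this] have KK: "pdv p (D - ([:0,1:] ^ N - 1) * K')"
    by (simp add: algebra_simps)
  have "K' = 0"
  proof (rule ccontr)
    assume "K' \<noteq> 0"
    define d where "d = degree K'"
    have c0: "coeff K' d \<noteq> 0" using \<open>K' \<noteq> 0\<close> by (simp add: d_def)
    have cb: "0 \<le> coeff K' d" "coeff K' d < int p" using p0 by (simp_all add: cK')
    have "coeff K' (N + d) = 0" using N0 by (intro coeff_eq_0) (simp add: d_def)
    moreover have "coeff D (N + d) = 0" by (simp add: D_def coeff_pol)
    moreover have "coeff (([:0,1:] ^ N - 1) * K') (N + d) = coeff ([:0,1:] ^ N * K') (N + d) - coeff K' (N + d)"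
      by (simp add: algebra_simps)
    ultimately have "coeff (D - ([:0,1:] ^ N - 1) * K') (N + d) = - coeff K' d"
      by (simp add: coeff_Xpow_mult)
    moreover have "int p dvd coeff (D - ([:0,1:] ^ N - 1) * K') (N + d)" using KK by (simp add: pdv_coeff)
    ultimately have "int p dvd coeff K' d" by simp
    then have "int p \<le> coeff K' d" using cb c0 by (simp add: zdvd_imp_le)
    then show False using cb by simp
  qed
  then have "pdv p D" using KK by simp
  show ?thesis
  proof
    fix g
    show "f g = f' g"
    proof (cases "g < N")
      case True
      have "int p dvd coeff D g" using \<open>pdv p D\<close> by (simp add: pdv_coeff)
      then have "int p dvd f g - f' g" using True by (simp add: D_def coeff_pol)
      then show ?thesis using f f' by (intro small_dvd_eq[of _ "int p"]) (auto simp: Fp_elem_def)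
    next
      case False
      then show ?thesis using f f' by (auto simp: Fp_elem_def N_def)
    qed
  qed
qed

lemma Fp_elem_fp_add: "p > 0 \<Longrightarrow> Fp_elem p n x \<Longrightarrow> Fp_elem p n y \<Longrightarrow> Fp_elem p n (fp_add p x y)"
  by (auto simp: Fp_elem_def fp_add_def)

lemma Fp_elem_fp_mul: "p > 0 \<Longrightarrow> Fp_elem p n (fp_mul p n x y)"
  by (auto simp: Fp_elem_def fp_mul_def)

lemma reduce_monom:
  assumes p0: "p > 0"
  shows "\<exists>b. Fp_elem p n b \<and> kc p (p ^ n) (pol (p ^ n) b - monom c i)"
proof -
  define N where "N = p ^ n"
  have N0: "N > 0" using p0 by (simp add: N_def)
  define b where "b g = (if g = i mod N then c mod int p else 0)" for g
  have "i mod N < N" using N0 by simp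
  have Fb: "Fp_elem p n b" unfolding Fp_elem_def
  proof
    fix g
    show "0 \<le> b g \<and> b g < int p \<and> (p ^ n \<le> g \<longrightarrow> b g = 0)"
      using p0 \<open>i mod N < N\<close> unfolding b_def N_def by (auto simp del: mod_less_divisor)
  qed
  have "pol N b = (\<Sum>g<N. if g = i mod N then monom (c mod int p) g else 0)"
    unfolding pol_def b_def by (intro sum.cong) auto
  also have "\<dots> = monom (c mod int p) (i mod N)" using N0 by (simp add: sum.delta')
  finally have pb: "pol N b = monom (c mod int p) (i mod N)" .
  have "pol N b - monom c i = smult (c mod int p - c) ([:0,1:] ^ (i mod N))
          - smult c ([:0,1:] ^ i - [:0,1:] ^ (i mod N))"
    unfolding pb monom_altdef by (simp add: algebra_simps smult_diff_right smult_diff_left)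
  moreover have "kc p N (smult (c mod int p - c) ([:0,1:] ^ (i mod N)))"
    by (intro kc_pdv pdv_smult_dvd dvd_mod_diff)
  moreover have "kc p N (smult c ([:0,1:] ^ i - [:0,1:] ^ (i mod N)))"
    by (intro kc_dvd dvd_smult Xpow_dvd)
  ultimately have "kc p N (pol N b - monom c i)" by (simp add: kc_diff)
  then show ?thesis using Fb by (auto simp: N_def)
qed

lemma reduce:
  assumes p0: "p > 0"
  shows "\<exists>b. Fp_elem p n b \<and> kc p (p ^ n) (pol (p ^ n) b - B)"
proof -
  have "\<exists>b. Fp_elem p n b \<and> kc p (p ^ n) (pol (p ^ n) b - (\<Sum>i\<in>A. monom (coeff B i) i))"
    if "finite A" for A
    using that
  proof (induct A rule: finite_induct)
    case empty
    have "Fp_elem p n (\<lambda>g. 0)" using p0 by (simp add: Fp_elem_def)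
    moreover have "pol (p ^ n) (\<lambda>g. 0) = 0" by (simp add: pol_def)
    ultimately show ?case by (intro exI[of _ "\<lambda>g. 0"]) (simp add: kc_pdv)
  next
    case (insert i A)
    obtain b1 where b1: "Fp_elem p n b1" "kc p (p ^ n) (pol (p ^ n) b1 - (\<Sum>i\<in>A. monom (coeff B i) i))"
      using insert by blast
    obtain b2 where b2: "Fp_elem p n b2" "kc p (p ^ n) (pol (p ^ n) b2 - monom (coeff B i) i)"
      using reduce_monom[OF p0] by blast
    have e: "pol (p ^ n) (fp_add p b1 b2) - (\<Sum>i\<in>insert i A. monom (coeff B i) i)
      = (pol (p ^ n) (fp_add p b1 b2) - (pol (p ^ n) b1 + pol (p ^ n) b2))
        + (pol (p ^ n) b1 - (\<Sum>i\<in>A. monom (coeff B i) i)) + (pol (p ^ n) b2 - monom (coeff B i) i)"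
      using insert by (simp add: algebra_simps)
    have "kc p (p ^ n) (pol (p ^ n) (fp_add p b1 b2) - (\<Sum>i\<in>insert i A. monom (coeff B i) i))"
      unfolding e by (intro kc_add kc_pdv pol_fp_add b1 b2)
    then show ?case using b1 b2 p0 Fp_elem_fp_add by blast
  qed
  from this[of "{..degree B}"] show ?thesis by (simp add: poly_as_sum_of_monoms)
qed

definition van :: "nat \<Rightarrow> nat \<Rightarrow> nat \<Rightarrow> (nat \<Rightarrow> int) \<Rightarrow> bool" where
  "van p n l f \<longleftrightarrow> (\<forall>j<l. j < p ^ n \<longrightarrow> int p dvd coeff (pcompose (pol (p ^ n) f) [:1,1:]) j)"

lemma aug_ideal_iff:
  "b \<in> aug_ideal p n \<longleftrightarrow> Fp_elem p n b \<and> int p dvd coeff (pcompose (pol (p ^ n) b) [:1,1:]) 0"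
  by (simp add: aug_ideal_def poly_pol_1 dvd_eq_mod_eq_0)

lemma dvd_from_diff: "(m::int) dvd a - b \<Longrightarrow> m dvd b \<Longrightarrow> m dvd a"
  using dvd_add[of m "a - b" b] by simp

lemma fwd:
  assumes pr: "prime p"
  shows "x \<in> aug_pow p n l \<Longrightarrow> Fp_elem p n x \<and> van p n l x"
proof (induct l arbitrary: x)
  case 0
  then show ?case by (simp add: van_def)
next
  case (Suc l)
  have p0: "p > 0" using pr prime_gt_0_nat by blast
  from Suc.prems have "x \<in> ideal_prod p n (aug_pow p n l) (aug_ideal p n)" by simp
  then show ?case
  proof (induct rule: ideal_prod.induct)
    case zero
    then show ?case using p0 by (simp add: Fp_elem_def van_def pol_def)
  next
    case (step x a b)
    let ?T = "\<lambda>F. pcompose F [:1,1:]"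
    let ?N = "p ^ n"
    have Fx: "Fp_elem p n x" and vx: "van p n (Suc l) x" using step by auto
    have Fa: "Fp_elem p n a" and va: "van p n l a" using Suc.hyps step by auto
    have Fb: "Fp_elem p n b" and vb: "int p dvd coeff (?T (pol ?N b)) 0"
      using step(4) by (auto simp: aug_ideal_iff)
    have F: "Fp_elem p n (fp_add p x (fp_mul p n a b))"
      using p0 Fx Fp_elem_fp_mul Fp_elem_fp_add by blast
    have "kc p ?N ((pol ?N (fp_add p x (fp_mul p n a b)) - (pol ?N x + pol ?N (fp_mul p n a b)))
              + (pol ?N (fp_mul p n a b) - pol ?N a * pol ?N b))"
      by (intro kc_add kc_pdv pol_fp_add pol_fp_mul p0)
    then have k: "kc p ?N (pol ?N (fp_add p x (fp_mul p n a b)) - (pol ?N x + pol ?N a * pol ?N b))"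
      by (simp add: algebra_simps)
    have "van p n (Suc l) (fp_add p x (fp_mul p n a b))"
      unfolding van_def
    proof (intro allI impI)
      fix j assume j: "j < Suc l" "j < ?N"
      have d1: "int p dvd coeff (?T (pol ?N (fp_add p x (fp_mul p n a b)))) j
               - coeff (?T (pol ?N x + pol ?N a * pol ?N b)) j"
        by (rule kc_coeff_diff[OF pr k j(2)])
      have d2: "int p dvd coeff (?T (pol ?N x)) j" using vx j by (simp add: van_def)
      have d3: "int p dvd coeff (?T (pol ?N a) * ?T (pol ?N b)) j"
        unfolding coeff_mult
      proof (rule dvd_sum)
        fix i assume i: "i \<in> {..j}"
        show "int p dvd coeff (?T (pol ?N a)) i * coeff (?T (pol ?N b)) (j - i)"
        proof (cases "i = j")
          case True then show ?thesis using vb by simp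
        next
          case False
          then have "i < l" "i < ?N" using i j by auto
          then show ?thesis using va by (simp add: van_def)
        qed
      qed
      have "coeff (?T (pol ?N x + pol ?N a * pol ?N b)) j
            = coeff (?T (pol ?N x)) j + coeff (?T (pol ?N a) * ?T (pol ?N b)) j"
        by (simp add: pcompose_add pcompose_mult)
      then show "int p dvd coeff (?T (pol ?N (fp_add p x (fp_mul p n a b)))) j"
        using d1 d2 d3 by (metis dvd_add dvd_from_diff)
    qed
    then show ?case using F by simp
  qed
qed

lemma bwd:
  assumes pr: "prime p"
  shows "Fp_elem p n f \<Longrightarrow> l \<le> p ^ n \<Longrightarrow> van p n l f \<Longrightarrow> f \<in> aug_pow p n l"
proof (induct l arbitrary: f)
  case 0
  then show ?case by simp
next
  case (Suc l)
  have p0: "p > 0" using pr prime_gt_0_nat by blast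
  let ?T = "\<lambda>F. pcompose F [:1,1:]"
  let ?N = "p ^ n"
  define F where "F = pol ?N f"
  obtain c0 B' where TF: "?T F = pCons c0 B'" by (metis pCons_cases)
  have c0: "int p dvd c0"
    using Suc.prems(2,3) TF unfolding van_def F_def
    by (metis coeff_pCons_0 zero_less_Suc order_less_le_trans)
  then obtain k0 where k0: "c0 = int p * k0" by blast
  define B where "B = pcompose B' [:-1,1:]"
  have TB: "?T B = B'"
    unfolding B_def pcompose_assoc[symmetric] by (simp add: pcompose_pCons)
  have "F = pcompose (?T F) [:-1,1:]"
    by (simp add: pcompose_assoc[symmetric] pcompose_pCons)
  also have "\<dots> = [:c0:] + [:-1,1:] * B" unfolding TF B_def by (simp add: pcompose_pCons)
  finally have FB: "F = [:c0:] + [:-1,1:] * B" .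
  obtain a where Fa: "Fp_elem p n a" and ka: "kc p ?N (pol ?N a - B)"
    using reduce[OF p0] by blast
  have "van p n l a"
    unfolding van_def
  proof (intro allI impI)
    fix j assume j: "j < l" "j < ?N"
    have "int p dvd coeff (?T (pol ?N a)) j - coeff (?T B) j"
      by (rule kc_coeff_diff[OF pr ka j(2)])
    moreover have "coeff (?T B) j = coeff (?T F) (Suc j)" unfolding TB TF by simp
    moreover have "int p dvd coeff (?T F) (Suc j)"
      using Suc.prems j unfolding van_def F_def by auto
    ultimately show "int p dvd coeff (?T (pol ?N a)) j" by (metis dvd_from_diff)
  qed
  then have aA: "a \<in> aug_pow p n l" using Suc.hyps Fa Suc.prems(2) by simp
  obtain b where Fb: "Fp_elem p n b" and kb: "kc p ?N (pol ?N b - [:-1,1:])"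
    using reduce[OF p0] by blast
  have "int p dvd coeff (?T (pol ?N b)) 0 - coeff (?T [:-1,1:]) 0"
    by (rule kc_coeff_diff[OF pr kb]) (simp add: p0)
  then have "int p dvd coeff (?T (pol ?N b)) 0" by simp
  then have bI: "b \<in> aug_ideal p n" using Fb by (simp add: aug_ideal_iff)
  define m where "m = fp_mul p n a b"
  have Fm: "Fp_elem p n m" using p0 by (simp add: m_def Fp_elem_fp_mul)
  have "kc p ?N ((pol ?N m - pol ?N a * pol ?N b) + (pol ?N a - B) * pol ?N b
          + B * (pol ?N b - [:-1,1:]) - smult (int p) [:k0:])"
    unfolding m_def
    by (intro kc_add kc_diff kc_multL kc_multR pol_fp_mul p0 ka kb kc_pdv pdv_smult_p)
  also have "(pol ?N m - pol ?N a * pol ?N b) + (pol ?N a - B) * pol ?N b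
          + B * (pol ?N b - [:-1,1:]) - smult (int p) [:k0:] = pol ?N m - F"
    unfolding FB k0 by (simp add: algebra_simps)
  finally have "kc p ?N (pol ?N m - pol ?N f)" by (simp add: F_def)
  then have mf: "m = f" using uniq[OF p0 Fm Suc.prems(1)] by simp
  have "fp_add p (\<lambda>g. 0) m = m"
    using Fm by (auto simp: fp_add_def Fp_elem_def)
  moreover have "fp_add p (\<lambda>g. 0) m \<in> ideal_prod p n (aug_pow p n l) (aug_ideal p n)"
    unfolding m_def by (rule ideal_prod.step[OF ideal_prod.zero aA bI])
  ultimately show ?case using mf by simp
qed

lemma lam_char:
  assumes pr: "prime p" and F: "Fp_elem p n f" and q: "q < p ^ n" and v: "van p n q f"
    and nd: "\<not> int p dvd coeff (pcompose (pol (p ^ n) f) [:1,1:]) q"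
  shows "(THE l. f \<in> aug_pow p n l \<and> f \<notin> aug_pow p n (Suc l)) = q"
proof (rule the_equality)
  show "f \<in> aug_pow p n q \<and> f \<notin> aug_pow p n (Suc q)"
  proof
    show "f \<in> aug_pow p n q" using bwd[OF pr F _ v] q by simp
    show "f \<notin> aug_pow p n (Suc q)"
    proof
      assume "f \<in> aug_pow p n (Suc q)"
      then have "van p n (Suc q) f" using fwd[OF pr] by blast
      then show False using nd q by (simp add: van_def)
    qed
  qed
next
  fix l assume l: "f \<in> aug_pow p n l \<and> f \<notin> aug_pow p n (Suc l)"
  show "l = q"
  proof (rule ccontr)
    assume "l \<noteq> q"
    then consider "q < l" | "l < q" by linarith
    then show False
    proof cases
      case 1
      then have "van p n l f" using fwd[OF pr] l by blast
      then show False using nd q 1 by (simp add: van_def)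
    next
      case 2
      then have "van p n (Suc l) f" using v by (simp add: van_def)
      moreover have "Suc l \<le> p ^ n" using 2 q by simp
      ultimately have "f \<in> aug_pow p n (Suc l)" using bwd[OF pr F] by blast
      then show False using l by blast
    qed
  qed
qed

lemma pdv_shift:
  assumes "pdv p ([:0,1:] ^ M * Q)"
  shows "pdv p Q"
  unfolding pdv_coeff
proof
  fix j
  have "int p dvd coeff ([:0,1:] ^ M * Q) (j + M)" using assms by (simp add: pdv_coeff)
  then show "int p dvd coeff Q j" by (simp add: coeff_Xpow_mult)
qed

lemma Phi_T:
  assumes pr: "prime p"
  shows "pdv p (pcompose (\<Sum>t<p. ([:0,1:] ^ (p ^ k)) ^ t) [:1,1:] - [:0,1:] ^ ((p - 1) * p ^ k))"
proof -
  define M where "M = p ^ k"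
  let ?X = "[:0,1:] :: int poly"
  define \<Phi> where "\<Phi> = (\<Sum>t<p. (?X ^ M) ^ t)"
  have e: "(?X ^ M) ^ p - 1 = (?X ^ M - 1) * \<Phi>" unfolding \<Phi>_def by (rule power_diff_1_eq)
  have "pcompose ((?X ^ M) ^ p - 1) [:1,1:] = pcompose ((?X ^ M - 1) * \<Phi>) [:1,1:]" using e by simp
  then have e2: "[:1,1:] ^ (p * M) - 1 = ([:1,1:] ^ M - 1) * pcompose \<Phi> [:1,1:]"
    by (simp add: pcompose_diff pcompose_mult pcompose_X_pow pcompose_1 power_mult[symmetric] mult.commute)
  have pM: "p * M = p ^ Suc k" by (simp add: M_def)
  have A: "pdv p ([:1,1:] ^ M - 1 - ?X ^ M)" using frob_pow[OF pr, of k] by (simp add: M_def algebra_simps)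
  have B: "pdv p ([:1,1:] ^ (p * M) - 1 - ?X ^ (p * M))" using frob_pow[OF pr, of "Suc k"] unfolding pM
    by (simp add: algebra_simps)
  have "pdv p (([:1,1:] ^ (p * M) - 1 - ?X ^ (p * M)) - ([:1,1:] ^ M - 1 - ?X ^ M) * pcompose \<Phi> [:1,1:])"
    by (intro pdv_diff pdv_multL A B)
  also have "([:1,1:] ^ (p * M) - 1 - ?X ^ (p * M)) - ([:1,1:] ^ M - 1 - ?X ^ M) * pcompose \<Phi> [:1,1:]
      = ?X ^ M * pcompose \<Phi> [:1,1:] - ?X ^ (p * M)"
    unfolding e2 by (simp add: algebra_simps)
  also have "?X ^ (p * M) = ?X ^ M * ?X ^ ((p - 1) * M)"
    using prime_gt_0_nat[OF pr] by (simp add: power_add[symmetric]) (metis Suc_pred mult_Suc)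
  finally have "pdv p (?X ^ M * (pcompose \<Phi> [:1,1:] - ?X ^ ((p - 1) * M)))"
    by (simp add: algebra_simps)
  then show ?thesis unfolding \<Phi>_def M_def by (rule pdv_shift)
qed

lemma fold_kc:
  assumes p0: "p > 0"
  shows "kc p (p ^ n) (pol (p ^ Suc n) r1
     - pol (p ^ n) (\<lambda>h. \<Sum>g\<in>{g. g < p ^ Suc n \<and> g mod p ^ n = h}. r1 g))"
proof -
  define N where "N = p ^ n"
  define N1 where "N1 = p ^ Suc n"
  have N0: "N > 0" using p0 by (simp add: N_def)
  have "pol N (\<lambda>h. \<Sum>g\<in>{g. g < N1 \<and> g mod N = h}. r1 g)
      = (\<Sum>h<N. \<Sum>g<N1. if g mod N = h then monom (r1 g) h else 0)"
    unfolding pol_def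
  proof (rule sum.cong[OF refl])
    fix h
    have "{g. g < N1 \<and> g mod N = h} = {g \<in> {..<N1}. g mod N = h}" by auto
    moreover have "(\<Sum>g\<in>{g \<in> {..<N1}. g mod N = h}. monom (r1 g) h)
        = (\<Sum>g<N1. if g mod N = h then monom (r1 g) h else 0)"
      by (rule sum.inter_filter) simp
    ultimately show "monom (\<Sum>g\<in>{g. g < N1 \<and> g mod N = h}. r1 g) h
        = (\<Sum>g<N1. if g mod N = h then monom (r1 g) h else 0)"
      by (simp add: monom_sum)
  qed
  also have "\<dots> = (\<Sum>g<N1. \<Sum>h<N. if g mod N = h then monom (r1 g) (g mod N) else 0)"
    by (subst sum.swap) (intro sum.cong refl, auto)
  also have "\<dots> = (\<Sum>g<N1. monom (r1 g) (g mod N))"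
    using N0 by (simp add: sum.delta)
  finally have e: "pol N (\<lambda>h. \<Sum>g\<in>{g. g < N1 \<and> g mod N = h}. r1 g) = (\<Sum>g<N1. monom (r1 g) (g mod N))" .
  have "kc p N (\<Sum>g<N1. monom (r1 g) g - monom (r1 g) (g mod N))"
    by (intro kc_sum kc_dvd) (simp add: monom_altdef smult_diff_right[symmetric] dvd_smult Xpow_dvd)
  moreover have "pol N1 r1 - pol N (\<lambda>h. \<Sum>g\<in>{g. g < N1 \<and> g mod N = h}. r1 g)
      = (\<Sum>g<N1. monom (r1 g) g - monom (r1 g) (g mod N))"
    unfolding e by (simp add: pol_def sum_subtractf)
  ultimately show ?thesis unfolding N_def[symmetric] N1_def[symmetric] by simp
qed

lemma nu_pol:
  "pol (p * M) (\<lambda>h. r0 (h mod M)) = pol M r0 * (\<Sum>t<p. ([:0,1:] ^ M) ^ t)"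
proof -
  let ?X = "[:0,1:] :: int poly"
  have "pol (p * M) (\<lambda>h. r0 (h mod M)) = (\<Sum>h<p * M. smult (r0 (h mod M)) (?X ^ h))"
    by (simp add: pol_smult)
  also have "\<dots> = (\<Sum>t<p. \<Sum>h\<in>{t * M..<t * M + M}. smult (r0 (h mod M)) (?X ^ h))"
    by (rule sum.nat_group[symmetric])
  also have "\<dots> = (\<Sum>t<p. \<Sum>r<M. smult (r0 r) (?X ^ r) * (?X ^ M) ^ t)"
  proof (rule sum.cong[OF refl])
    fix t
    have "(\<Sum>h\<in>{t * M..<t * M + M}. smult (r0 (h mod M)) (?X ^ h))
        = (\<Sum>h\<in>{0 + t * M..<M + t * M}. smult (r0 (h mod M)) (?X ^ h))" by (simp add: add.commute)
    also have "\<dots> = (\<Sum>r\<in>{0..<M}. smult (r0 ((r + t * M) mod M)) (?X ^ (r + t * M)))"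
      by (rule sum.shift_bounds_nat_ivl)
    also have "\<dots> = (\<Sum>r<M. smult (r0 r) (?X ^ r) * (?X ^ M) ^ t)"
      by (intro sum.cong) (auto simp: power_add power_mult[symmetric] mult.commute)
    finally show "(\<Sum>h\<in>{t * M..<t * M + M}. smult (r0 (h mod M)) (?X ^ h))
        = (\<Sum>r<M. smult (r0 r) (?X ^ r) * (?X ^ M) ^ t)" .
  qed
  also have "\<dots> = pol M r0 * (\<Sum>t<p. (?X ^ M) ^ t)"
    by (simp add: pol_smult sum_distrib_left sum_distrib_right)
  finally show ?thesis .
qed

lemma step_coeff:
  assumes pr: "prime p"
    and hyp: "\<forall>h < p ^ Suc m. int p dvd (\<Sum>g\<in>{g. g < p ^ Suc (Suc m) \<and> g mod p ^ Suc m = h}. r1 g) + r0 (h mod p ^ m)"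
    and j: "j < p ^ Suc m"
  shows "int p dvd coeff (pcompose (pol (p ^ Suc (Suc m)) r1) [:1,1:]) j
     + (if j < (p - 1) * p ^ m then 0 else coeff (pcompose (pol (p ^ m) r0) [:1,1:]) (j - (p - 1) * p ^ m))"
proof -
  have p0: "p > 0" using pr prime_gt_0_nat by blast
  let ?T = "\<lambda>F. pcompose F [:1,1:]"
  let ?X = "[:0,1:] :: int poly"
  define M where "M = p ^ m"
  define D where "D = (p - 1) * M"
  define \<Phi> where "\<Phi> = (\<Sum>t<p. (?X ^ M) ^ t)"
  define Fold where "Fold = pol (p ^ Suc m) (\<lambda>h. \<Sum>g\<in>{g. g < p ^ Suc (Suc m) \<and> g mod p ^ Suc m = h}. r1 g)"
  have NM: "p ^ Suc m = p * M" by (simp add: M_def)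
  have 1: "kc p (p ^ Suc m) (pol (p ^ Suc (Suc m)) r1 - Fold)"
    unfolding Fold_def by (rule fold_kc[OF p0])
  have 2: "pdv p (Fold + pol (p ^ Suc m) (\<lambda>h. r0 (h mod M)))"
    unfolding pdv_coeff Fold_def using hyp by (simp add: coeff_pol M_def)
  have "kc p (p ^ Suc m) ((pol (p ^ Suc (Suc m)) r1 - Fold) + (Fold + pol (p ^ Suc m) (\<lambda>h. r0 (h mod M))))"
    by (intro kc_add 1 kc_pdv 2)
  then have "kc p (p ^ Suc m) (pol (p ^ Suc (Suc m)) r1 + pol M r0 * \<Phi>)"
    unfolding NM nu_pol \<Phi>_def by simp
  from kc_coeff[OF pr this j] have 3:
    "int p dvd coeff (?T (pol (p ^ Suc (Suc m)) r1)) j + coeff (?T (pol M r0) * ?T \<Phi>) j"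
    by (simp add: pcompose_add pcompose_mult)
  have 4: "pdv p (?T \<Phi> - ?X ^ D)" unfolding \<Phi>_def D_def M_def by (rule Phi_T[OF pr])
  have "?T (pol M r0) * ?T \<Phi> = ?X ^ D * ?T (pol M r0) + ?T (pol M r0) * (?T \<Phi> - ?X ^ D)"
    by (simp add: algebra_simps)
  then have "coeff (?T (pol M r0) * ?T \<Phi>) j
      = coeff (?X ^ D * ?T (pol M r0)) j + coeff (?T (pol M r0) * (?T \<Phi> - ?X ^ D)) j"
    by (metis coeff_add)
  moreover have "int p dvd coeff (?T (pol M r0) * (?T \<Phi> - ?X ^ D)) j"
    using pdv_multR[OF 4] by (simp add: pdv_coeff)
  ultimately have d5: "int p dvd coeff (?T (pol M r0) * ?T \<Phi>) j - coeff (?X ^ D * ?T (pol M r0)) j"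
    by simp
  have "int p dvd coeff (?T (pol (p ^ Suc (Suc m)) r1)) j + coeff (?X ^ D * ?T (pol M r0)) j"
    using dvd_add[OF 3 dvd_minus_iff[THEN iffD2, OF d5]] by (simp add: algebra_simps)
  then show ?thesis unfolding coeff_Xpow_mult D_def M_def by (simp split: if_split_asm)
qed

lemma q_alt: "q_seq p n = (\<Sum>i\<in>{(if even n then 0 else 1)..<n}. (-1) ^ (n - 1 - i) * int p ^ i)"
proof (cases "n < 2")
  case True
  then have "n = 0 \<or> n = 1" by auto
  then show ?thesis by (auto simp: q_seq_def)
next
  case False
  then show ?thesis by (auto simp: q_seq_def atLeast0LessThan)
qed

lemma q_rec: "q_seq p (Suc (Suc m)) = q_seq p m + int p ^ Suc m - int p ^ m"
proof -
  define s where "s = (if even m then 0 else 1::nat)"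
  have s: "s \<le> m" by (cases "even m") (auto simp: s_def elim: oddE)
  have ss: "(if even (Suc (Suc m)) then 0 else 1::nat) = s" by (simp add: s_def)
  have "q_seq p (Suc (Suc m)) = (\<Sum>i\<in>{s..<Suc (Suc m)}. (-1) ^ (Suc m - i) * int p ^ i)"
    unfolding q_alt ss by simp
  also have "\<dots> = (\<Sum>i\<in>{s..<m}. (-1) ^ (Suc m - i) * int p ^ i) + (-1) * int p ^ m + int p ^ Suc m"
    using s by (simp add: sum.atLeastLessThan_Suc Suc_diff_le)
  also have "(\<Sum>i\<in>{s..<m}. (-1) ^ (Suc m - i) * int p ^ i) = (\<Sum>i\<in>{s..<m}. (-1) ^ (m - 1 - i) * int p ^ i)"
  proof (rule sum.cong[OF refl])
    fix i assume "i \<in> {s..<m}"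
    then have "Suc m - i = Suc (Suc (m - 1 - i))" by auto
    then show "(-1) ^ (Suc m - i) * int p ^ i = (-1) ^ (m - 1 - i) * int p ^ i" by simp
  qed
  also have "\<dots> = q_seq p m" unfolding q_alt s_def by simp
  finally show ?thesis by simp
qed

lemma q_bounds: "p > 0 \<Longrightarrow> 0 \<le> q_seq p n \<and> q_seq p n < int p ^ n"
proof (induct n rule: less_induct)
  case (less n)
  show ?case
  proof (cases "n < 2")
    case True
    then show ?thesis using less.prems by (simp add: q_seq_def)
  next
    case False
    then obtain m where n: "n = Suc (Suc m)" by (metis add_2_eq_Suc le_Suc_ex not_less)
    have IH: "0 \<le> q_seq p m" "q_seq p m < int p ^ m" using less n by auto
    have "int p ^ m \<le> int p ^ Suc m" using less.prems by (simp add: power_increasing)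
    moreover have "int p ^ Suc m \<le> int p ^ Suc (Suc m)" using less.prems by (simp add: power_increasing)
    ultimately show ?thesis unfolding n q_rec using IH by linarith
  qed
qed

lemma q_rec_bound: "p > 0 \<Longrightarrow> q_seq p (Suc (Suc m)) < int p ^ Suc m"
  using q_bounds[of p m] unfolding q_rec by linarith

lemma zp_one_mul:
  assumes p1: "p > 1" and z: "zp p x"
  shows "zp_mul p (zp_of_int p (int p ^ 0)) x = x"
proof
  fix k
  show "zp_mul p (zp_of_int p (int p ^ 0)) x k = x k"
  proof (cases k)
    case 0
    then show ?thesis using z unfolding zp_def zp_mul_def
      by (metis mod_by_1 power_0 zero_le_imp_eq_int int_one_le_iff_zero_less not_le)
  next
    case (Suc k')
    have "int p > 1" using p1 by simp
    then have "int p ^ k > 1" using one_less_power[of "int p" k] Suc by simp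
    then show ?thesis using z unfolding zp_def zp_mul_def zp_of_int_def by simp
  qed
qed

lemma zp_zero: "p > 0 \<Longrightarrow> zp p (zp_of_int p 0)"
  by (simp add: zp_def zp_of_int_def)

lemma lam_smult_one:
  assumes p1: "p > 1" and L: "Lam p n G"
  shows "lam_smult p (zp_of_int p (int p ^ 0)) G = G"
proof
  fix g
  have "zp p (G g)" using L zp_zero[of p] p1 by (cases "g < p ^ n") (auto simp: Lam_def)
  then show "lam_smult p (zp_of_int p (int p ^ 0)) G g = G g"
    unfolding lam_smult_def using zp_one_mul[OF p1] by simp
qed

lemma red_smult_p:
  assumes "m \<ge> 1"
  shows "lam_smult p (zp_of_int p (int p ^ m)) G g 1 = 0"
proof -
  have "int p ^ m mod int p = 0" using assms by (simp add: power_eq_if)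
  then show ?thesis by (simp add: lam_smult_def zp_mul_def zp_of_int_def)
qed

lemma mu_zero:
  assumes p1: "p > 1" and L: "Lam p n F" and nz: "\<exists>g. F g 1 \<noteq> 0"
  shows "mu_inv p n F = 0"
  unfolding mu_inv_def
proof (rule the_equality)
  show "in_pLam p n 0 F \<and> \<not> in_pLam p n (Suc 0) F"
  proof
    show "in_pLam p n 0 F" unfolding in_pLam_def using L lam_smult_one[OF p1 L] by metis
    show "\<not> in_pLam p n (Suc 0) F"
      unfolding in_pLam_def using red_smult_p[of "Suc 0" p] nz by auto
  qed
next
  fix m assume m: "in_pLam p n m F \<and> \<not> in_pLam p n (Suc m) F"
  show "m = 0"
  proof (rule ccontr)
    assume "m \<noteq> 0"
    then show False using m red_smult_p[of m p] nz unfolding in_pLam_def by auto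
  qed
qed

lemma lambda_red:
  assumes p1: "p > 1" and L: "Lam p n F" and nz: "\<exists>g. F g 1 \<noteq> 0"
  shows "lambda_inv p n F = (THE l. red F \<in> aug_pow p n l \<and> red F \<notin> aug_pow p n (Suc l))"
proof -
  have "(THE G. Lam p n G \<and> F = lam_smult p (zp_of_int p (int p ^ mu_inv p n F)) G) = F"
    unfolding mu_zero[OF p1 L nz]
  proof (rule the_equality)
    show "Lam p n F \<and> F = lam_smult p (zp_of_int p (int p ^ 0)) F" using L lam_smult_one[OF p1 L] by simp
  next
    fix G assume "Lam p n G \<and> F = lam_smult p (zp_of_int p (int p ^ 0)) G"
    then show "G = F" using lam_smult_one[OF p1] by metis
  qed
  then show ?thesis unfolding lambda_inv_def Let_def by simp
qed

theorem lemma5p1: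
  fixes p :: nat and a :: "nat \<Rightarrow> int" and P :: "nat \<Rightarrow> nat \<Rightarrow> nat \<Rightarrow> int"
  assumes "prime p" and "odd p"
    and "zp_in_pZp p a"
    and "\<forall>n. Lam p n (P n)"
    and "zp_unit p (P 0 0)"
    and "\<exists>u. zp_unit p u \<and> lam_pi p 1 (P 1) = lam_smult p u (P 0)"
    and "\<forall>n\<ge>1. lam_pi p (n + 1) (P (n + 1)) =
           lam_add p (lam_smult p a (P n)) (lam_neg p (lam_nu p n (P (n - 1))))"
  shows "\<forall>n. P n \<noteq> (\<lambda>g. zp_of_int p 0) \<and> mu_inv p n (P n) = 0
             \<and> int (lambda_inv p n (P n)) = q_seq p n"
proof -
  have pr: "prime p" using assms(1) .
  have p1: "p > 1" using pr prime_gt_1_nat by blast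
  have p0: "p > 0" using p1 by simp
  have pri: "prime (int p)" using pr by simp
  define R where "R n = (\<lambda>g. P n g 1)" for n
  define c where "c n j = coeff (pcompose (pol (p ^ n) (R n)) [:1,1:]) j" for n j
  define Q where "Q n = nat (q_seq p n)" for n
  have Qint: "int (Q n) = q_seq p n" for n using q_bounds[OF p0, of n] by (simp add: Q_def)
  have QN: "Q n < p ^ n" for n
  proof -
    have "int (Q n) < int (p ^ n)" using q_bounds[OF p0, of n] Qint[of n] by simp
    then show ?thesis by linarith
  qed
  have FR: "Fp_elem p n (R n)" for n
    unfolding Fp_elem_def
  proof
    fix g
    have L: "Lam p n (P n)" using assms(4) by blast
    show "0 \<le> R n g \<and> R n g < int p \<and> (p ^ n \<le> g \<longrightarrow> R n g = 0)"
    proof (cases "g < p ^ n")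
      case True
      then have "zp p (P n g)" using L by (simp add: Lam_def)
      then have "0 \<le> P n g 1" "P n g 1 < int p ^ 1" unfolding zp_def by blast+
      then show ?thesis using True by (simp add: R_def)
    next
      case False
      then have "P n g = zp_of_int p 0" using L by (simp add: Lam_def)
      then show ?thesis using False p0 by (simp add: R_def zp_of_int_def)
    qed
  qed
  have c0: "c n 0 = (\<Sum>g<p ^ n. R n g)" for n by (simp add: c_def poly_pol_1)
  define Inv where "Inv n \<longleftrightarrow> (\<forall>j<Q n. int p dvd c n j) \<and> \<not> int p dvd c n (Q n)" for n
  have a1: "a 1 = 0"
  proof -
    obtain b where "a = zp_mul p (zp_of_int p (int p)) b" using assms(3) by (auto simp: zp_in_pZp_def)
    then show ?thesis by (simp add: zp_mul_def zp_of_int_def)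
  qed
  have unit1: "\<not> int p dvd x 1" if ux: "zp_unit p x" for x
  proof
    assume d: "int p dvd x 1"
    obtain y where "zp_mul p x y = zp_of_int p 1" using ux unfolding zp_unit_def by blast
    then have "zp_mul p x y 1 = zp_of_int p 1 1" by simp
    then have "(x 1 * y 1) mod int p = 1" using p1 by (simp add: zp_mul_def zp_of_int_def)
    moreover have "(x 1 * y 1) mod int p = 0" using d by simp
    ultimately show False by simp
  qed
  have base0: "Inv 0"
  proof -
    have "Q 0 = 0" by (simp add: Q_def q_seq_def)
    moreover have "c 0 0 = P 0 0 1" by (simp add: c0 R_def)
    ultimately show ?thesis using unit1[OF assms(5)] by (simp add: Inv_def)
  qed
  have base1: "Inv 1"
  proof -
    obtain u where u: "zp_unit p u" and e: "lam_pi p 1 (P 1) = lam_smult p u (P 0)" using assms(6) by blast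
    have "lam_pi p 1 (P 1) 0 1 = lam_smult p u (P 0) 0 1" using e by simp
    moreover have "{g. g < p \<and> g mod 1 = 0} = {..<p}" by auto
    ultimately have "(\<Sum>g<p. P 1 g 1) mod int p = (u 1 * P 0 0 1) mod int p"
      by (simp add: lam_pi_def zp_sum_def lam_smult_def zp_mul_def)
    moreover have "\<not> int p dvd u 1 * P 0 0 1"
      using unit1[OF u] unit1[OF assms(5)] pri by (simp add: prime_dvd_mult_iff)
    ultimately have "\<not> int p dvd (\<Sum>g<p. P 1 g 1)" by (simp add: dvd_eq_mod_eq_0)
    moreover have "Q 1 = 0" by (simp add: Q_def q_seq_def)
    ultimately show ?thesis by (simp add: Inv_def c0 R_def)
  qed
  have step: "Inv (Suc (Suc m))" if IH: "Inv m" for m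
  proof -
    have hyp: "\<forall>h < p ^ Suc m. int p dvd (\<Sum>g\<in>{g. g < p ^ Suc (Suc m) \<and> g mod p ^ Suc m = h}. R (Suc (Suc m)) g) + R m (h mod p ^ m)"
    proof (intro allI impI)
      fix h assume h: "h < p ^ Suc m"
      have "lam_pi p (Suc m + 1) (P (Suc m + 1)) =
           lam_add p (lam_smult p a (P (Suc m))) (lam_neg p (lam_nu p (Suc m) (P (Suc m - 1))))"
        using assms(7) by simp
      then have "lam_pi p (Suc m + 1) (P (Suc m + 1)) h 1 =
           lam_add p (lam_smult p a (P (Suc m))) (lam_neg p (lam_nu p (Suc m) (P (Suc m - 1)))) h 1"
        by simp
      then have "(\<Sum>g\<in>{g. g < p ^ Suc (Suc m) \<and> g mod p ^ Suc m = h}. P (Suc (Suc m)) g 1) mod int p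
          = (- P m (h mod p ^ m) 1) mod int p"
        using h by (simp add: lam_pi_def zp_sum_def lam_add_def zp_add_def lam_smult_def zp_mul_def a1[simplified]
              lam_neg_def zp_neg_def lam_nu_def)
      then show "int p dvd (\<Sum>g\<in>{g. g < p ^ Suc (Suc m) \<and> g mod p ^ Suc m = h}. R (Suc (Suc m)) g) + R m (h mod p ^ m)"
        by (simp add: mod_eq_dvd_iff R_def)
    qed
    define D where "D = (p - 1) * p ^ m"
    have sc: "int p dvd c (Suc (Suc m)) j + (if j < D then 0 else c m (j - D))" if "j < p ^ Suc m" for j
      unfolding c_def D_def by (rule step_coeff[OF pr hyp that])
    have "int D = int p ^ Suc m - int p ^ m" using p0 by (simp add: D_def of_nat_diff algebra_simps)
    then have QD: "Q (Suc (Suc m)) = Q m + D" using Qint[of m] Qint[of "Suc (Suc m)"] q_rec[of p m] by linarith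
    have QB: "Q (Suc (Suc m)) < p ^ Suc m"
    proof -
      have "int (Q (Suc (Suc m))) < int (p ^ Suc m)" using q_rec_bound[OF p0, of m] Qint by simp
      then show ?thesis by linarith
    qed
    have "\<forall>j<Q (Suc (Suc m)). int p dvd c (Suc (Suc m)) j"
    proof (intro allI impI)
      fix j assume j: "j < Q (Suc (Suc m))"
      have s: "int p dvd c (Suc (Suc m)) j + (if j < D then 0 else c m (j - D))"
        using sc j QB by simp
      show "int p dvd c (Suc (Suc m)) j"
      proof (cases "j < D")
        case True then show ?thesis using s by simp
      next
        case False
        then have "j - D < Q m" using j QD by simp
        then have "int p dvd c m (j - D)" using IH by (simp add: Inv_def)
        then show ?thesis using s False by (metis add_diff_cancel_right' dvd_diff)
      qed
    qed
    moreover have "\<not> int p dvd c (Suc (Suc m)) (Q (Suc (Suc m)))"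
    proof
      assume d: "int p dvd c (Suc (Suc m)) (Q (Suc (Suc m)))"
      have s: "int p dvd c (Suc (Suc m)) (Q (Suc (Suc m))) + c m (Q m)"
        using sc[OF QB] QD by simp
      have "int p dvd c m (Q m)" using dvd_diff[OF s d] by simp
      then show False using IH by (simp add: Inv_def)
    qed
    ultimately show ?thesis by (simp add: Inv_def)
  qed
  have "Inv n \<and> Inv (Suc n)" for n
    by (induct n) (use base0 base1 step in auto)
  then have Inv: "Inv n" for n by blast
  show ?thesis
  proof (intro allI conjI)
    fix n
    have L: "Lam p n (P n)" using assms(4) by blast
    have nd: "\<not> int p dvd c n (Q n)" using Inv[of n] by (simp add: Inv_def)
    have nz: "\<exists>g. P n g 1 \<noteq> 0"
    proof (rule ccontr)
      assume "\<not> (\<exists>g. P n g 1 \<noteq> 0)"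
      then have "R n = (\<lambda>g. 0)" by (auto simp: R_def)
      then have "c n (Q n) = 0" by (simp add: c_def pol_def)
      then show False using nd by simp
    qed
    show "P n \<noteq> (\<lambda>g. zp_of_int p 0)"
      using nz by (auto simp: zp_of_int_def)
    show "mu_inv p n (P n) = 0" by (rule mu_zero[OF p1 L nz])
    have rd: "red (P n) = R n" by (simp add: red_def R_def)
    have "van p n (Q n) (R n)" using Inv[of n] by (simp add: van_def Inv_def c_def)
    then have "(THE l. R n \<in> aug_pow p n l \<and> R n \<notin> aug_pow p n (Suc l)) = Q n"
      using lam_char[OF pr FR QN] nd by (simp add: c_def)
    then show "int (lambda_inv p n (P n)) = q_seq p n"
      using lambda_red[OF p1 L nz] rd Qint by simp
  qed
qed

end
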